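(* Let $N$ be a natural number, $P=\{a\subseteq N: |a|\geq 2\}$, and let $\|\cdot\|_3$ be the graph coloring norm on subsets of $P$ (defined in the context). Let $n$ be a natural number and $A\subseteq P$. If $A$ can be split by $2^n$ sets, then $\|A\|_3\leq n$.
   Context: $N=\{0,\ldots,N-1\}$. For $A\subseteq P$ and $z\subseteq N$ let $A\restriction z=\{a\in A: a\subseteq z\}$. The relation "$\|A\|_3\geq m$" is defined recursively: $\|A\|_3\geq 0$ always; $\|A\|_3\geq 1$ iff $A\neq\emptyset$; for $m\geq 1$, $\|A\|_3\geq m+1$ iff for every $z\subseteq N$ either $\|A\restriction z\|_3\geq m$ or $\|A\restriction(N\setminus z)\|_3\geq m$. Then $\|A\|_3$ is the largest $m$ with $\|A\|_3\geq m$. $A$ is split by sets $V_0,\ldots,V_{c-1}$ (pairwise disjoint, possibly empty, with union $N$) if $A\restriction V_j=\emptyset$ for every $j<c$; $A$ can be split by $c$ sets if such a partition of $N$ into $c$ sets exists. *)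

theory Defs
  imports Main
begin

definition Pset :: "nat \<Rightarrow> nat set set" where
  "Pset N = {a. a \<subseteq> {..<N} \<and> card a \<ge> 2}"

definition restr :: "nat set set \<Rightarrow> nat set \<Rightarrow> nat set set" where
  "restr A z = {a \<in> A. a \<subseteq> z}"

text \<open>norm3_ge N A m  means  ||A||_3 >= m.\<close>
fun norm3_ge :: "nat \<Rightarrow> nat set set \<Rightarrow> nat \<Rightarrow> bool" where
  "norm3_ge N A 0 = True"
| "norm3_ge N A (Suc 0) = (A \<noteq> {})"
| "norm3_ge N A (Suc (Suc m)) =
     (\<forall>z. z \<subseteq> {..<N} \<longrightarrow>
        norm3_ge N (restr A z) (Suc m) \<or> norm3_ge N (restr A ({..<N} - z)) (Suc m))"

definition norm3 :: "nat \<Rightarrow> nat set set \<Rightarrow> nat" where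
  "norm3 N A = (GREATEST m. norm3_ge N A m)"

definition split_by :: "nat \<Rightarrow> nat set set \<Rightarrow> nat \<Rightarrow> bool" where
  "split_by N A c = (\<exists>V :: nat \<Rightarrow> nat set.
      (\<forall>i<c. \<forall>j<c. i \<noteq> j \<longrightarrow> V i \<inter> V j = {}) \<and>
      (\<Union>j<c. V j) = {..<N} \<and>
      (\<forall>j<c. restr A (V j) = {}))"

end

theory Submission
  imports Defs
begin

lemma empty_ge: "\<not> norm3_ge N {} (Suc m)"
proof (induction m)
  case 0 then show ?case by simp
next
  case (Suc m)
  have "\<And>z. restr {} z = {}" by (simp add: restr_def)
  then show ?case using Suc by auto
qed

lemma main:
  "\<forall>a\<in>A. a \<subseteq> {..<N} \<Longrightarrow> {..<N} \<subseteq> (\<Union>j<(2::nat)^n. V j) \<Longrightarrow>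
   \<forall>j<2^n. restr A (V j) = {} \<Longrightarrow> Suc n \<le> m \<Longrightarrow> \<not> norm3_ge N A m"
proof (induction n arbitrary: A V m)
  case 0
  then have "{..<N} \<subseteq> V 0" "restr A (V 0) = {}" by auto
  then have "A = {}" using 0(1) unfolding restr_def by blast
  moreover obtain k where "m = Suc k" using 0 by (cases m) auto
  ultimately show ?case using empty_ge by simp
next
  case (Suc n)
  obtain k where m: "m = Suc (Suc k)" and kn: "Suc n \<le> Suc k"
    using Suc.prems(4) by (cases m; cases "m - 1") auto
  define z where "z = {..<N} \<inter> (\<Union>j<2^n. V j)"
  have z: "z \<subseteq> {..<N}" by (simp add: z_def)
  have 1: "\<not> norm3_ge N (restr A z) (Suc k)"
  proof (rule Suc.IH[where V = "\<lambda>j. V j \<union> (UNIV - z)"])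
    show "\<forall>a\<in>restr A z. a \<subseteq> {..<N}" using Suc.prems(1) by (auto simp: restr_def)
    show "{..<N} \<subseteq> (\<Union>j<2 ^ n. V j \<union> (UNIV - z))"
    proof
      fix x assume x: "x \<in> {..<N}"
      show "x \<in> (\<Union>j<2 ^ n. V j \<union> (UNIV - z))"
      proof (cases "x \<in> z")
        case True then show ?thesis by (auto simp: z_def)
      next
        case False
        have "(0::nat) < 2^n" by simp
        then show ?thesis using False by blast
      qed
    qed
    show "\<forall>j<2 ^ n. restr (restr A z) (V j \<union> (UNIV - z)) = {}"
    proof (intro allI impI)
      fix j :: nat assume j: "j < 2^n"
      then have "restr A (V j) = {}" using Suc.prems(3) by simp
      then show "restr (restr A z) (V j \<union> (UNIV - z)) = {}"
        by (auto simp: restr_def)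
    qed
    show "Suc n \<le> Suc k" by fact
  qed
  have 2: "\<not> norm3_ge N (restr A ({..<N} - z)) (Suc k)"
  proof (rule Suc.IH[where V = "\<lambda>j. V (2^n + j) \<union> z"])
    show "\<forall>a\<in>restr A ({..<N} - z). a \<subseteq> {..<N}" using Suc.prems(1) by (auto simp: restr_def)
    show "{..<N} \<subseteq> (\<Union>j<2 ^ n. V (2^n + j) \<union> z)"
    proof
      fix x assume x: "x \<in> {..<N}"
      show "x \<in> (\<Union>j<2 ^ n. V (2^n + j) \<union> z)"
      proof (cases "x \<in> z")
        case True
        have "(0::nat) < 2^n" by simp
        then show ?thesis using True by blast
      next
        case False
        from x Suc.prems(2) obtain i where i: "i < 2^Suc n" "x \<in> V i" by auto
        with False x have "\<not> i < 2^n" by (auto simp: z_def)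
        then have "i - 2^n < 2^n" "2^n + (i - 2^n) = i" using i by auto
        then show ?thesis using i by (metis (no_types, lifting) UN_iff UnI1 lessThan_iff)
      qed
    qed
    show "\<forall>j<2 ^ n. restr (restr A ({..<N} - z)) (V (2^n + j) \<union> z) = {}"
    proof (intro allI impI)
      fix j :: nat assume j: "j < 2^n"
      then have "restr A (V (2^n + j)) = {}" using Suc.prems(3) by simp
      then show "restr (restr A ({..<N} - z)) (V (2^n + j) \<union> z) = {}"
        by (auto simp: restr_def)
    qed
    show "Suc n \<le> Suc k" by fact
  qed
  show ?case unfolding m using 1 2 z by auto
qed

theorem theorem5p10:
  fixes N n :: nat and A :: "nat set set"
  assumes "A \<subseteq> Pset N"
    and "split_by N A (2 ^ n)"
  shows "norm3 N A \<le> n"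
proof -
  obtain V :: "nat \<Rightarrow> nat set" where V: "(\<Union>j<(2::nat)^n. V j) = {..<N}" "\<forall>j<2^n. restr A (V j) = {}"
  proof -
    from assms(2) obtain V :: "nat \<Rightarrow> nat set" where
      "(\<Union>j<2^n. V j) = {..<N}" "\<forall>j<2^n. restr A (V j) = {}"
      unfolding split_by_def by (elim exE conjE) simp
    then show ?thesis using that by simp
  qed
  have A: "\<forall>a\<in>A. a \<subseteq> {..<N}" using assms(1) by (auto simp: Pset_def)
  have b: "\<forall>y. norm3_ge N A y \<longrightarrow> y \<le> n"
    using main[OF A _ V(2)] V(1) by (metis not_less_eq_eq order_refl)
  have "norm3_ge N A (norm3 N A)"
    unfolding norm3_def by (rule GreatestI_nat[of _ 0]) (use b in auto)
  then show ?thesis using b by blast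
qed

end
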